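(* Let $F,S_1,\ldots,S_m,S_a$ be formulas and $1\le i\le m$. If $\emptyset[F,S_1,\ldots,S_{i-1},S_i,\ldots,S_m]=\emptyset[S_1,\ldots,S_{i-1},S_i,\ldots,S_m]$, then $\emptyset[F,S_1,\ldots,S_{i-1},S_a,S_i,\ldots,S_m]=\emptyset[S_1,\ldots,S_{i-1},S_a,S_i,\ldots,S_m]$.
   Context: Propositional models are truth assignments over a finite set of variables; a formula used where a set of models is expected stands for its set of models. A doxastic state is a sequence $[C(0),\ldots,C(k)]$ of nonempty, pairwise disjoint sets of models covering all models. The flat doxastic state $\emptyset$ is $[\text{all models}]$. Lexicographic revision: $C\,\mathrm{lex}(A) = [C(0)\cap A,\ldots,C(k)\cap A, C(0)\setminus A,\ldots,C(k)\setminus A]$, empty sets discarded. $\emptyset[T_1,\ldots,T_n]$ denotes $\emptyset$ revised lexicographically by $T_1$, then $T_2$, ..., then $T_n$. *)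

theory Defs
  imports Main
begin

datatype 'v form = Var 'v | Top | Bot | Neg "'v form"
  | Conj "'v form" "'v form" | Disj "'v form" "'v form"

type_synonym 'v model = "'v set"

fun holds :: "'v model \<Rightarrow> 'v form \<Rightarrow> bool" where
  "holds M (Var x) = (x \<in> M)"
| "holds M Top = True"
| "holds M Bot = False"
| "holds M (Neg A) = (\<not> holds M A)"
| "holds M (Conj A B) = (holds M A \<and> holds M B)"
| "holds M (Disj A B) = (holds M A \<or> holds M B)"

definition models :: "'v form \<Rightarrow> 'v model set" where
  "models A = {M. holds M A}"

(* a doxastic state: list [C(0),...,C(k)] of classes of models *)
type_synonym 'v doxstate = "'v model set list"

definition flat :: "'v doxstate" where
  "flat = [UNIV]"

(* lexicographic revision, empty classes discarded *)
definition lex :: "'v doxstate \<Rightarrow> 'v form \<Rightarrow> 'v doxstate" where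
  "lex C A = filter (\<lambda>X. X \<noteq> {})
     (map (\<lambda>X. X \<inter> models A) C @ map (\<lambda>X. X - models A) C)"

(* \<emptyset>[T1,...,Tn] *)
definition revs :: "'v form list \<Rightarrow> 'v doxstate" where
  "revs Ts = foldl lex flat Ts"

end

theory Submission
  imports Defs
begin

definition splitc :: "'v doxstate \<Rightarrow> 'v model set \<Rightarrow> 'v doxstate" where
  "splitc C X = concat (map (\<lambda>Y. filter (\<lambda>Z. Z \<noteq> {}) [Y \<inter> X, Y - X]) C)"

lemma filter_concat_map:
  "filter P (concat (map f xs)) = concat (map (\<lambda>x. filter P (f x)) xs)"
  by (induction xs) auto

lemma splitc_append: "splitc (xs @ ys) X = splitc xs X @ splitc ys X"
  unfolding splitc_def by simp

lemma splitc_filter: "splitc (filter (\<lambda>Z. Z \<noteq> {}) xs) X = splitc xs X"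
  unfolding splitc_def by (induction xs) auto

lemma splitc_int: "filter (\<lambda>Z. Z \<noteq> {}) (map (\<lambda>Y. Y \<inter> A) (splitc C X)) = splitc (map (\<lambda>Y. Y \<inter> A) C) X"
  unfolding splitc_def by (induction C) (auto simp: Int_ac Diff_Int_distrib2)

lemma splitc_diff: "filter (\<lambda>Z. Z \<noteq> {}) (map (\<lambda>Y. Y - A) (splitc C X)) = splitc (map (\<lambda>Y. Y - A) C) X"
  unfolding splitc_def by (induction C) (auto simp: Diff_Int_distrib2 Int_Diff Diff_eq Int_ac)

lemma lex_splitc: "lex (splitc C X) A = splitc (lex C A) X"
  unfolding lex_def
  by (simp only: filter_append splitc_append splitc_filter splitc_int splitc_diff)

lemma foldl_splitc: "foldl lex (splitc C X) Ts = splitc (foldl lex C Ts) X"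
  by (induction Ts arbitrary: C) (auto simp: lex_splitc)

lemma revs_cons: "revs (F # T) = splitc (revs T) (models F)"
proof -
  have "lex flat F = splitc flat (models F)"
    by (simp add: lex_def splitc_def flat_def)
  then show ?thesis by (simp add: revs_def foldl_splitc)
qed

lemma revs_nonempty: "{} \<notin> set (revs T)"
proof (cases T rule: rev_cases)
  case Nil then show ?thesis by (simp add: revs_def flat_def)
next
  case (snoc ys y) then show ?thesis by (simp add: revs_def lex_def)
qed

definition refines :: "'v doxstate \<Rightarrow> 'v doxstate \<Rightarrow> bool" where
  "refines D C = (\<forall>Y\<in>set D. \<exists>Z\<in>set C. Y \<subseteq> Z)"

lemma refines_lex: "refines D C \<Longrightarrow> refines (lex D A) (lex C A)"
  unfolding refines_def
proof
  fix Y assume r: "\<forall>Y\<in>set D. \<exists>Z\<in>set C. Y \<subseteq> Z" and Y: "Y \<in> set (lex D A)"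
  then have ne: "Y \<noteq> {}" by (auto simp: lex_def)
  from Y obtain W where W: "W \<in> set D" "Y = W \<inter> models A \<or> Y = W - models A"
    by (auto simp: lex_def)
  from r W obtain Z where Z: "Z \<in> set C" "W \<subseteq> Z" by blast
  show "\<exists>Z\<in>set (lex C A). Y \<subseteq> Z"
  proof (cases "Y = W \<inter> models A")
    case True
    then have "Z \<inter> models A \<in> set (lex C A)" using ne Z by (auto simp: lex_def)
    then show ?thesis using True Z by blast
  next
    case False
    then have Yd: "Y = W - models A" using W by blast
    then have "Z - models A \<in> set (lex C A)" using ne Z by (auto simp: lex_def)
    then show ?thesis using Yd Z by blast
  qed
qed

lemma refines_lex_self: "refines (lex C A) C"
  unfolding refines_def lex_def by auto

lemma refines_foldl: "refines D C \<Longrightarrow> refines (foldl lex D ys) (foldl lex C ys)"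
  by (induction ys arbitrary: D C) (auto simp: refines_lex)

lemma refines_insert: "refines (revs (xs @ [a] @ ys)) (revs (xs @ ys))"
  unfolding revs_def by (simp add: refines_foldl refines_lex_self)

lemma splitc_id:
  assumes "\<forall>Y\<in>set D. Y \<noteq> {} \<and> (Y \<subseteq> X \<or> Y \<inter> X = {})"
  shows "splitc D X = D"
  using assms unfolding splitc_def
  by (induction D) (auto simp: Int_absorb2 Diff_triv)

lemma splitc_hom: "Y \<in> set (splitc D X) \<Longrightarrow> Y \<subseteq> X \<or> Y \<inter> X = {}"
  unfolding splitc_def by (auto split: if_splits)

theorem mainTheorem10:
  fixes F Sa :: "('v::finite) form" and S :: "'v form list" and i :: nat
  assumes "1 \<le> i" and "i \<le> length S"
    and "revs (F # S) = revs S"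
  shows "revs (F # take (i - 1) S @ [Sa] @ drop (i - 1) S)
       = revs (take (i - 1) S @ [Sa] @ drop (i - 1) S)"
proof -
  let ?X = "models F"
  let ?S' = "take (i - 1) S @ [Sa] @ drop (i - 1) S"
  have hom: "\<forall>Y\<in>set (revs S). Y \<subseteq> ?X \<or> Y \<inter> ?X = {}"
    using assms(3) splitc_hom by (metis revs_cons)
  have ref: "refines (revs ?S') (revs S)"
    using refines_insert[of "take (i - 1) S" Sa "drop (i - 1) S"] by simp
  have "\<forall>Y\<in>set (revs ?S'). Y \<noteq> {} \<and> (Y \<subseteq> ?X \<or> Y \<inter> ?X = {})"
  proof
    fix Y assume Y: "Y \<in> set (revs ?S')"
    then have "Y \<noteq> {}" using revs_nonempty by metis
    moreover obtain Z where "Z \<in> set (revs S)" "Y \<subseteq> Z" using ref Y unfolding refines_def by blast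
    ultimately show "Y \<noteq> {} \<and> (Y \<subseteq> ?X \<or> Y \<inter> ?X = {})" using hom by blast
  qed
  then have "splitc (revs ?S') ?X = revs ?S'" by (rule splitc_id)
  then show ?thesis using revs_cons[of F ?S'] by simp
qed

end
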